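(* For positive integers $K\le P$ and $\theta=(K,P)$, $\lim_{n\to\infty}T_n(\theta)/\binom{n}{3}=\beta(\theta)$ almost surely.
   Context: Random key graph: for positive integers $K\le P$, $\theta=(K,P)$ and $n\ge3$, let $K_1(\theta),\dots,K_n(\theta)$ be i.i.d. random subsets of $\{1,\dots,P\}$, each uniform over the $K$-element subsets; the random key graph $\mathbb{K}(n;\theta)$ on $\{1,\dots,n\}$ has an edge between distinct $i,j$ iff $K_i(\theta)\cap K_j(\theta)\ne\emptyset$; $T_n(\theta)$ is its number of triangles. All graphs for different $n$ are defined on a common probability space. $q(\theta)=\binom{P-K}{K}/\binom{P}{K}$ if $2K\le P$ and $0$ otherwise; $r(\theta)=\binom{P-2K}{K}/\binom{P}{K}$ if $3K\le P$ and $0$ otherwise; $\beta(\theta)=(1-q)^3+q^3-qr$. *)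

theory Defs
  imports "HOL-Probability.Probability"
begin

definition key_rings :: "nat \<Rightarrow> nat \<Rightarrow> nat set set" where
  "key_rings K P = {S. S \<subseteq> {1..P} \<and> card S = K}"

definition q_rkg :: "nat \<Rightarrow> nat \<Rightarrow> real" where
  "q_rkg K P = (if 2 * K \<le> P then real ((P - K) choose K) / real (P choose K) else 0)"

definition r_rkg :: "nat \<Rightarrow> nat \<Rightarrow> real" where
  "r_rkg K P = (if 3 * K \<le> P then real ((P - 2 * K) choose K) / real (P choose K) else 0)"

definition beta_rkg :: "nat \<Rightarrow> nat \<Rightarrow> real" where
  "beta_rkg K P = (1 - q_rkg K P) ^ 3 + q_rkg K P ^ 3 - q_rkg K P * r_rkg K P"

definition rkg_adj :: "(nat \<Rightarrow> nat set) \<Rightarrow> nat \<Rightarrow> nat \<Rightarrow> bool" where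
  "rkg_adj Ks i j \<longleftrightarrow> i \<noteq> j \<and> Ks i \<inter> Ks j \<noteq> {}"

definition triangles :: "(nat \<Rightarrow> nat set) \<Rightarrow> nat \<Rightarrow> nat" where
  "triangles Ks n = card {(i, j, k). 1 \<le> i \<and> i < j \<and> j < k \<and> k \<le> n \<and>
      rkg_adj Ks i j \<and> rkg_adj Ks j k \<and> rkg_adj Ks i k}"

end

theory Submission
  imports Defs "HOL-Library.Discrete_Functions" "HOL-Real_Asymp.Real_Asymp"
begin


definition dj :: "nat set \<Rightarrow> nat set \<Rightarrow> real" where
  "dj a b = (if a \<inter> b = {} then 1 else 0)"

lemma finite_KR: "finite (key_rings K P)"
  unfolding key_rings_def by (rule finite_subset[of _ "Pow {1..P}"]) auto

lemma card_KR: "card (key_rings K P) = P choose K"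
  unfolding key_rings_def using n_subsets[of "{1..P}" K] by simp

lemma KR_ne: "K \<le> P \<Longrightarrow> key_rings K P \<noteq> {}"
  using card_KR[of K P] by (auto simp: zero_less_binomial_iff)

lemma disj_count:
  assumes "a \<subseteq> {1..P}"
  shows "card {b \<in> key_rings K P. a \<inter> b = {}} = (P - card a) choose K"
proof -
  have "{b \<in> key_rings K P. a \<inter> b = {}} = {B. B \<subseteq> {1..P} - a \<and> card B = K}"
    unfolding key_rings_def by auto
  moreover have "card ({1..P} - a) = P - card a"
    using assms by (simp add: card_Diff_subset finite_subset)
  ultimately show ?thesis using n_subsets[of "{1..P} - a" K] by simp
qed

lemma sum_dj1:
  assumes "a \<in> key_rings K P"
  shows "(\<Sum>b\<in>key_rings K P. dj a b) = real ((P - K) choose K)"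
proof -
  have "(\<Sum>b\<in>key_rings K P. dj a b) = real (card {b \<in> key_rings K P. a \<inter> b = {}})"
    unfolding dj_def using finite_KR[of K P] by (simp add: sum.If_cases Int_def)
  also have "\<dots> = real ((P - K) choose K)"
    using assms disj_count[of a P K] by (simp add: key_rings_def)
  finally show ?thesis .
qed

lemma sum_dj2:
  assumes "a \<in> key_rings K P" "b \<in> key_rings K P" "a \<inter> b = {}"
  shows "(\<Sum>c\<in>key_rings K P. dj a c * dj b c) = real ((P - 2*K) choose K)"
proof -
  have "(\<Sum>c\<in>key_rings K P. dj a c * dj b c) = real (card {c \<in> key_rings K P. (a \<union> b) \<inter> c = {}})"
  proof -
    have "\<And>c. dj a c * dj b c = (if (a \<union> b) \<inter> c = {} then 1 else 0)"
      unfolding dj_def by auto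
    then show ?thesis using finite_KR[of K P] by (simp add: sum.If_cases Int_def)
  qed
  also have "card (a \<union> b) = 2 * K"
    using assms by (subst card_Un_disjoint) (auto simp: key_rings_def intro: finite_subset)
  hence "card {c \<in> key_rings K P. (a \<union> b) \<inter> c = {}} = (P - 2*K) choose K"
    using assms disj_count[of "a \<union> b" P K] by (simp add: key_rings_def)
  finally show ?thesis by simp
qed

lemma dj_sym: "dj a b = dj b a" unfolding dj_def by (simp add: Int_commute)

lemma tri_sum:
  fixes K P :: nat
  defines "KR \<equiv> key_rings K P" and "N \<equiv> real (P choose K)"
    and "D \<equiv> real ((P - K) choose K)" and "R \<equiv> real ((P - 2*K) choose K)"
  shows "(\<Sum>a\<in>KR. \<Sum>b\<in>KR. \<Sum>c\<in>KR. (1 - dj a b) * (1 - dj b c) * (1 - dj a c))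
        = N^3 - 3*N^2*D + 3*N*D^2 - N*D*R"
proof -
  have cN: "real (card KR) = N" unfolding KR_def N_def card_KR ..
  have s1: "\<And>a. a \<in> KR \<Longrightarrow> (\<Sum>b\<in>KR. dj a b) = D" unfolding KR_def D_def by (rule sum_dj1)
  have s1': "\<And>b. b \<in> KR \<Longrightarrow> (\<Sum>a\<in>KR. dj a b) = D" using s1 dj_sym by (metis (no_types, lifting) sum.cong)
  have s2: "\<And>a b. a \<in> KR \<Longrightarrow> b \<in> KR \<Longrightarrow> dj a b * (\<Sum>c\<in>KR. dj a c * dj b c) = dj a b * R"
  proof -
    fix a b assume ab: "a \<in> KR" "b \<in> KR"
    show "dj a b * (\<Sum>c\<in>KR. dj a c * dj b c) = dj a b * R"
    proof (cases "a \<inter> b = {}")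
      case True
      then show ?thesis using sum_dj2[of a K P b] ab unfolding KR_def R_def by simp
    qed (simp add: dj_def)
  qed
  have exp: "\<And>a b c. (1 - dj a b) * (1 - dj b c) * (1 - dj a c) =
     1 - dj a b - dj b c - dj a c + dj a b * dj b c + dj a b * dj a c + dj b c * dj a c
       - dj a b * (dj a c * dj b c)"
    by (simp add: algebra_simps)
  have t1: "(\<Sum>a\<in>KR. \<Sum>b\<in>KR. \<Sum>c\<in>KR. (1::real)) = N^3"
    using cN by (simp add: power3_eq_cube)
  have t2: "(\<Sum>a\<in>KR. \<Sum>b\<in>KR. \<Sum>c\<in>KR. dj a b) = N^2 * D"
    using cN s1 by (simp add: power2_eq_square flip: sum_distrib_left)
  have t3: "(\<Sum>a\<in>KR. \<Sum>b\<in>KR. \<Sum>c\<in>KR. dj b c) = N^2 * D"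
    using cN s1 by (simp add: power2_eq_square)
  have t4: "(\<Sum>a\<in>KR. \<Sum>b\<in>KR. \<Sum>c\<in>KR. dj a c) = N^2 * D"
    using cN s1 by (simp add: power2_eq_square)
  have t5: "(\<Sum>a\<in>KR. \<Sum>b\<in>KR. \<Sum>c\<in>KR. dj a b * dj b c) = N * D^2"
    using cN s1 by (simp add: power2_eq_square flip: sum_distrib_left sum_distrib_right)
  have t6: "(\<Sum>a\<in>KR. \<Sum>b\<in>KR. \<Sum>c\<in>KR. dj a b * dj a c) = N * D^2"
    using cN s1 by (simp add: power2_eq_square flip: sum_distrib_left sum_distrib_right)
  have t7: "(\<Sum>a\<in>KR. \<Sum>b\<in>KR. \<Sum>c\<in>KR. dj b c * dj a c) = N * D^2"
  proof -
    have "\<And>a. a \<in> KR \<Longrightarrow> (\<Sum>b\<in>KR. \<Sum>c\<in>KR. dj b c * dj a c) = D^2"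
    proof -
      fix a assume a: "a \<in> KR"
      have "(\<Sum>b\<in>KR. \<Sum>c\<in>KR. dj b c * dj a c) = (\<Sum>c\<in>KR. \<Sum>b\<in>KR. dj b c * dj a c)"
        by (rule sum.swap)
      also have "\<dots> = (\<Sum>c\<in>KR. D * dj a c)"
        using s1' by (simp flip: sum_distrib_right)
      also have "\<dots> = D^2" using s1[OF a] by (simp add: power2_eq_square flip: sum_distrib_left)
      finally show "(\<Sum>b\<in>KR. \<Sum>c\<in>KR. dj b c * dj a c) = D^2" .
    qed
    then show ?thesis using cN by simp
  qed
  have t8: "(\<Sum>a\<in>KR. \<Sum>b\<in>KR. \<Sum>c\<in>KR. dj a b * (dj a c * dj b c)) = N * D * R"
  proof -
    have "\<And>a b. a \<in> KR \<Longrightarrow> b \<in> KR \<Longrightarrow> (\<Sum>c\<in>KR. dj a b * (dj a c * dj b c)) = dj a b * R"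
      using s2 by (simp flip: sum_distrib_left)
    then have "(\<Sum>a\<in>KR. \<Sum>b\<in>KR. \<Sum>c\<in>KR. dj a b * (dj a c * dj b c)) = (\<Sum>a\<in>KR. \<Sum>b\<in>KR. dj a b * R)"
      by simp
    also have "\<dots> = (\<Sum>a\<in>KR. D * R)" using s1 by (simp flip: sum_distrib_right)
    finally show ?thesis using cN by simp
  qed
  show ?thesis
    unfolding exp
    by (simp only: sum.distrib sum_subtractf t1 t2 t3 t4 t5 t6 t7 t8)
qed

lemma q_eq: "q_rkg K P = real ((P - K) choose K) / real (P choose K)"
  unfolding q_rkg_def by (auto simp: binomial_eq_0)

lemma r_eq: "0 < K \<Longrightarrow> r_rkg K P = real ((P - 2*K) choose K) / real (P choose K)"
  unfolding r_rkg_def by (auto simp: binomial_eq_0)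

lemma beta_eq:
  assumes "0 < K" "K \<le> P"
  shows "beta_rkg K P = (\<Sum>a\<in>key_rings K P. \<Sum>b\<in>key_rings K P. \<Sum>c\<in>key_rings K P.
            (1 - dj a b) * (1 - dj b c) * (1 - dj a c)) / real (P choose K) ^ 3"
proof -
  define N where "N = real (P choose K)"
  define D where "D = real ((P - K) choose K)"
  define R where "R = real ((P - 2*K) choose K)"
  have N: "N > 0" using assms unfolding N_def by simp
  have "beta_rkg K P = (1 - D/N)^3 + (D/N)^3 - (D/N)*(R/N)"
    unfolding beta_rkg_def q_eq r_eq[OF assms(1)] N_def D_def R_def ..
  also have "\<dots> = (N^3 - 3*N^2*D + 3*N*D^2 - N*D*R) / N^3"
    using N by (simp add: field_simps power2_eq_square power3_eq_cube)
  finally show ?thesis unfolding tri_sum N_def D_def R_def .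
qed


lemma choose2_real: "real (n choose 2) = real n * (real n - 1) / 2"
proof (induction n)
  case (Suc n)
  have "real (Suc n choose 2) = real (n choose 1) + real (n choose 2)"
    by (simp add: numeral_2_eq_2)
  then show ?case using Suc by (simp add: field_simps)
qed simp

lemma choose3_real: "real (n choose 3) = real n * (real n - 1) * (real n - 2) / 6"
proof (induction n)
  case (Suc n)
  have "real (Suc n choose 3) = real (n choose 2) + real (n choose 3)"
    by (simp add: numeral_3_eq_3 numeral_2_eq_2)
  then show ?case using Suc choose2_real[of n] by (simp add: field_simps)
qed simp

definition Tr :: "nat \<Rightarrow> (nat \<times> nat \<times> nat) set" where
  "Tr n = {(i, j, k). 1 \<le> i \<and> i < j \<and> j < k \<and> k \<le> n}"

definition Pr2 :: "nat \<Rightarrow> (nat \<times> nat) set" where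
  "Pr2 n = {(i, j). 1 \<le> i \<and> i < j \<and> j \<le> n}"

lemma Tr_sub: "Tr n \<subseteq> {1..n} \<times> {1..n} \<times> {1..n}"
  unfolding Tr_def by auto

lemma finite_Tr: "finite (Tr n)"
  by (rule finite_subset[OF Tr_sub]) auto

lemma Tr_mono: "m \<le> n \<Longrightarrow> Tr m \<subseteq> Tr n"
  unfolding Tr_def by auto

lemma card_Pr2: "card (Pr2 n) = n choose 2"
proof (induction n)
  case 0
  have "Pr2 0 = {}" unfolding Pr2_def by auto
  then show ?case by simp
next
  case (Suc n)
  have eq: "Pr2 (Suc n) = Pr2 n \<union> (\<lambda>i. (i, Suc n)) ` {1..n}"
    unfolding Pr2_def by auto
  have fin: "finite (Pr2 n)" by (rule finite_subset[of _ "{1..n} \<times> {1..n}"]) (auto simp: Pr2_def)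
  have disj: "Pr2 n \<inter> (\<lambda>i. (i, Suc n)) ` {1..n} = {}" unfolding Pr2_def by auto
  have "card (Pr2 (Suc n)) = card (Pr2 n) + card ((\<lambda>i. (i, Suc n)) ` {1..n})"
    unfolding eq using fin disj by (intro card_Un_disjoint) auto
  also have "card ((\<lambda>i. (i, Suc n)) ` {1..n}) = n"
    by (subst card_image) (auto simp: inj_on_def)
  finally show ?case using Suc by (simp add: numeral_2_eq_2)
qed

lemma card_Tr: "card (Tr n) = n choose 3"
proof (induction n)
  case 0
  have "Tr 0 = {}" unfolding Tr_def by auto
  then show ?case by simp
next
  case (Suc n)
  have eq: "Tr (Suc n) = Tr n \<union> (\<lambda>(i,j). (i, j, Suc n)) ` Pr2 n"
  proof (rule set_eqI)
    fix t :: "nat \<times> nat \<times> nat"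
    obtain a b c where t: "t = (a, b, c)" by (cases t) auto
    show "t \<in> Tr (Suc n) \<longleftrightarrow> t \<in> Tr n \<union> (\<lambda>(i,j). (i, j, Suc n)) ` Pr2 n"
      unfolding t Tr_def Pr2_def by (cases "c = Suc n") (auto simp: image_iff)
  qed
  have disj: "Tr n \<inter> (\<lambda>(i,j). (i, j, Suc n)) ` Pr2 n = {}" unfolding Tr_def Pr2_def by auto
  have fin2: "finite (Pr2 n)" by (rule finite_subset[of _ "{1..n} \<times> {1..n}"]) (auto simp: Pr2_def)
  have "card (Tr (Suc n)) = card (Tr n) + card ((\<lambda>(i,j). (i, j, Suc n)) ` Pr2 n)"
    unfolding eq using finite_Tr fin2 disj by (intro card_Un_disjoint) auto
  also have "card ((\<lambda>(i,j). (i, j, Suc n)) ` Pr2 n) = n choose 2"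
    by (subst card_image) (auto simp: inj_on_def card_Pr2)
  finally show ?case using Suc by (simp add: numeral_3_eq_3 numeral_2_eq_2)
qed

lemma ratio_lim: "(\<lambda>k. real (((k+4)^2) choose 3) / real (((k+3)^2) choose 3)) \<longlonglongrightarrow> 1"
  unfolding choose3_real by (simp add: of_nat_add of_nat_power) real_asymp

lemma sandwich:
  fixes T c :: "nat \<Rightarrow> real"
  assumes Tmono: "\<And>m n. m \<le> n \<Longrightarrow> T m \<le> T n" and T0: "\<And>n. 0 \<le> T n"
    and cmono: "\<And>m n. m \<le> n \<Longrightarrow> c m \<le> c n" and cpos: "\<And>n. n \<ge> 9 \<Longrightarrow> c n > 0"
    and lim: "(\<lambda>k. T ((k+3)^2) / c ((k+3)^2)) \<longlonglongrightarrow> \<beta>"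
    and ratio: "(\<lambda>k. c ((k+4)^2) / c ((k+3)^2)) \<longlonglongrightarrow> 1"
  shows "(\<lambda>n. T n / c n) \<longlonglongrightarrow> \<beta>"
proof -
  define kk where "kk n = floor_sqrt n - 3" for n
  have bnd: "(kk n + 3)^2 \<le> n \<and> n \<le> (kk n + 4)^2" if "n \<ge> 9" for n
  proof -
    have "3 \<le> floor_sqrt n" using that by (simp add: le_floor_sqrt_iff)
    then have "kk n + 3 = floor_sqrt n" unfolding kk_def by simp
    moreover have "Suc (floor_sqrt n) = kk n + 4" using \<open>kk n + 3 = floor_sqrt n\<close> by simp
    ultimately show ?thesis using floor_sqrt_power2_le[of n] Suc_floor_sqrt_power2_gt[of n]
      by (simp add: add.commute)
  qed
  have kk: "filterlim kk at_top sequentially"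
    unfolding filterlim_at_top
  proof
    fix Z
    show "eventually (\<lambda>n. Z \<le> kk n) sequentially"
      unfolding eventually_sequentially
    proof (intro exI allI impI)
      fix n assume "(Z+3)^2 \<le> n"
      then have "Z + 3 \<le> floor_sqrt n" by (simp add: le_floor_sqrt_iff)
      then show "Z \<le> kk n" unfolding kk_def by simp
    qed
  qed
  define L where "L k = T ((k+3)^2) / c ((k+3)^2) * (c ((k+3)^2) / c ((k+4)^2))" for k
  define H where "H k = T ((k+4)^2) / c ((k+4)^2) * (c ((k+4)^2) / c ((k+3)^2))" for k
  have ratio': "(\<lambda>k. c ((k+3)^2) / c ((k+4)^2)) \<longlonglongrightarrow> 1"
    using tendsto_inverse[OF ratio] by (simp add: inverse_eq_divide)
  have lim': "(\<lambda>k. T ((k+4)^2) / c ((k+4)^2)) \<longlonglongrightarrow> \<beta>"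
    using LIMSEQ_Suc[OF lim] by (simp add: add.commute add.left_commute)
  have L: "L \<longlonglongrightarrow> \<beta>" unfolding L_def using tendsto_mult[OF lim ratio'] by simp
  have H: "H \<longlonglongrightarrow> \<beta>" unfolding H_def using tendsto_mult[OF lim' ratio] by simp
  have L': "(\<lambda>n. L (kk n)) \<longlonglongrightarrow> \<beta>" by (rule filterlim_compose[OF L kk])
  have H': "(\<lambda>n. H (kk n)) \<longlonglongrightarrow> \<beta>" by (rule filterlim_compose[OF H kk])
  show ?thesis
  proof (rule tendsto_sandwich[OF _ _ L' H'])
    show "eventually (\<lambda>n. L (kk n) \<le> T n / c n) sequentially"
      unfolding eventually_sequentially
    proof (intro exI allI impI)
      fix n :: nat assume n: "9 \<le> n"
      define a where "a = (kk n + 3)^2"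
      define b where "b = (kk n + 4)^2"
      have ab: "a \<le> n" "n \<le> b" using bnd[OF n] unfolding a_def b_def by auto
      have a9: "a \<ge> 9" unfolding a_def using mult_le_mono[of 3 "kk n+3" 3 "kk n+3"] by (simp add: power2_eq_square)
      have ca: "c a > 0" using cpos[OF a9] .
      have cb: "c b > 0" using cpos[of b] ab a9 by simp
      have "L (kk n) = T a / c b" unfolding L_def a_def[symmetric]
        using ca by (simp add: b_def add.commute)
      also have "\<dots> \<le> T a / c n"
        using cmono[OF ab(2)] T0[of a] cpos[of n] n by (intro divide_left_mono) auto
      also have "\<dots> \<le> T n / c n"
        using Tmono[OF ab(1)] cpos[of n] n by (intro divide_right_mono) auto
      finally show "L (kk n) \<le> T n / c n" .
    qed
    show "eventually (\<lambda>n. T n / c n \<le> H (kk n)) sequentially"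
      unfolding eventually_sequentially
    proof (intro exI allI impI)
      fix n :: nat assume n: "9 \<le> n"
      define a where "a = (kk n + 3)^2"
      define b where "b = (kk n + 4)^2"
      have ab: "a \<le> n" "n \<le> b" using bnd[OF n] unfolding a_def b_def by auto
      have a9: "a \<ge> 9" unfolding a_def using mult_le_mono[of 3 "kk n+3" 3 "kk n+3"] by (simp add: power2_eq_square)
      have ca: "c a > 0" using cpos[OF a9] .
      have cb: "c b > 0" using cpos[of b] ab a9 by simp
      have "H (kk n) = T b / c a" unfolding H_def b_def[symmetric]
        using cb by (simp add: a_def add.commute)
      moreover have "T n / c n \<le> T n / c a"
        using cmono[OF ab(1)] T0[of n] ca by (intro divide_left_mono) auto
      moreover have "T n / c a \<le> T b / c a"
        using Tmono[OF ab(2)] ca by (intro divide_right_mono) auto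
      ultimately show "T n / c n \<le> H (kk n)" by linarith
    qed
  qed
qed


lemma dj_meas[measurable]:
  assumes f: "f \<in> N \<rightarrow>\<^sub>M count_space UNIV" and g: "g \<in> N \<rightarrow>\<^sub>M count_space UNIV"
  shows "(\<lambda>x. dj (f x) (g x)) \<in> borel_measurable N"
proof -
  have p: "Measurable.pred N (\<lambda>x. n \<in> f x \<and> n \<in> g x)" for n
  proof -
    have "(\<lambda>x. n \<in> f x) \<in> N \<rightarrow>\<^sub>M count_space UNIV"
      by (rule measurable_compose[OF f]) simp
    moreover have "(\<lambda>x. n \<in> g x) \<in> N \<rightarrow>\<^sub>M count_space UNIV"
      by (rule measurable_compose[OF g]) simp
    ultimately show ?thesis
      by (rule pred_intros_logic(3))
  qed
  have "Measurable.pred N (\<lambda>x. \<not> (\<exists>n::nat. n \<in> f x \<and> n \<in> g x))"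
    using p by measurable
  hence "Measurable.pred N (\<lambda>x. f x \<inter> g x = {})"
    by (rule measurable_cong[THEN iffD1, rotated]) auto
  hence "{x \<in> space N. f x \<inter> g x = {}} \<in> sets N" by (simp add: pred_def)
  then show ?thesis unfolding dj_def by (intro measurable_If) auto
qed

definition tri3 :: "nat set \<Rightarrow> nat set \<Rightarrow> nat set \<Rightarrow> real" where
  "tri3 a b c = (1 - dj a b) * (1 - dj b c) * (1 - dj a c)"

lemma tri3_meas[measurable]:
  assumes "f \<in> N \<rightarrow>\<^sub>M count_space UNIV" "g \<in> N \<rightarrow>\<^sub>M count_space UNIV" "h \<in> N \<rightarrow>\<^sub>M count_space UNIV"
  shows "(\<lambda>x. tri3 (f x) (g x) (h x)) \<in> borel_measurable N"
  unfolding tri3_def using assms by measurable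

lemma tri3_bounds: "0 \<le> tri3 a b c" "tri3 a b c \<le> 1"
  unfolding tri3_def dj_def by auto

lemma sum_ind3:
  assumes "finite A" "x \<in> A" "y \<in> A" "z \<in> A"
  shows "(\<Sum>a\<in>A. \<Sum>b\<in>A. \<Sum>c\<in>A. g a b c * (if x = a \<and> y = b \<and> z = c then 1 else 0)) = (g x y z :: real)"
proof -
  have 1: "\<And>a b. (\<Sum>c\<in>A. g a b c * (if x = a \<and> y = b \<and> z = c then 1 else 0)) =
      (if y = b then (if x = a then g a b z else 0) else 0)"
  proof -
    fix a b
    have "(\<Sum>c\<in>A. g a b c * (if x = a \<and> y = b \<and> z = c then 1 else 0)) =
      (\<Sum>c\<in>A. if z = c then (if x = a \<and> y = b then g a b c else 0) else 0)"
      by (intro sum.cong) auto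
    also have "\<dots> = (if y = b then (if x = a then g a b z else 0) else 0)"
      using assms by (subst sum.delta') auto
    finally show "?thesis a b" .
  qed
  have 2: "\<And>a. (\<Sum>b\<in>A. (if y = b then (if x = a then g a b z else 0) else 0)) =
      (if x = a then g a y z else 0)"
    using assms by (subst sum.delta') auto
  show ?thesis unfolding 1 2 using assms by (subst sum.delta') auto
qed

locale rkg = prob_space M for M :: "'a measure" +
  fixes Kr :: "nat \<Rightarrow> 'a \<Rightarrow> nat set" and K P :: nat
  assumes K: "0 < K" "K \<le> P"
    and Kr_meas[measurable]: "\<And>i. Kr i \<in> M \<rightarrow>\<^sub>M count_space UNIV"
    and indep: "indep_vars (\<lambda>_. count_space UNIV) Kr UNIV"
    and distr_Kr: "\<And>i. distr M (count_space UNIV) (Kr i) = measure_pmf (pmf_of_set (key_rings K P))"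
begin

abbreviation "KR \<equiv> key_rings K P"
abbreviation "NN \<equiv> real (P choose K)"

lemma KR_fin: "finite KR" and KR_ne': "KR \<noteq> {}"
  using finite_KR KR_ne K by auto

lemma NN_pos: "NN > 0" using K by simp

lemma prob_single:
  assumes "a \<in> KR" shows "prob (Kr i -` {a} \<inter> space M) = 1 / NN"
proof -
  have "prob (Kr i -` {a} \<inter> space M) = measure (distr M (count_space UNIV) (Kr i)) {a}"
    by (subst measure_distr) auto
  also have "\<dots> = 1 / NN" unfolding distr_Kr measure_pmf_single
    using assms KR_fin KR_ne' by (simp add: card_KR)
  finally show ?thesis .
qed

lemma AE_KR: "AE \<omega> in M. Kr i \<omega> \<in> KR"
proof (rule AE_distrD[OF Kr_meas])
  show "AE x in distr M (count_space UNIV) (Kr i). x \<in> KR"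
    unfolding distr_Kr using AE_measure_pmf[of "pmf_of_set KR"] KR_fin KR_ne' by simp
qed

lemma E3:
  assumes ij: "i \<noteq> j" "j \<noteq> k" "i \<noteq> k"
    and fm: "(\<lambda>\<omega>. f (Kr i \<omega>) (Kr j \<omega>) (Kr k \<omega>)) \<in> borel_measurable M"
  shows "(\<integral>\<omega>. f (Kr i \<omega>) (Kr j \<omega>) (Kr k \<omega>) \<partial>M) =
         (\<Sum>a\<in>KR. \<Sum>b\<in>KR. \<Sum>c\<in>KR. f a b c) / NN ^ 3"
proof -
  define Ev where "Ev a b c = {\<omega> \<in> space M. Kr i \<omega> = a \<and> Kr j \<omega> = b \<and> Kr k \<omega> = c}" for a b c
  have Ev_sets: "Ev a b c \<in> sets M" for a b c
    unfolding Ev_def by measurable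
  have "AE \<omega> in M. f (Kr i \<omega>) (Kr j \<omega>) (Kr k \<omega>) =
          (\<Sum>a\<in>KR. \<Sum>b\<in>KR. \<Sum>c\<in>KR. f a b c * indicator (Ev a b c) \<omega>)"
    using AE_KR[of i] AE_KR[of j] AE_KR[of k] AE_space
  proof eventually_elim
    case (elim \<omega>)
    have "\<And>a b c. indicator (Ev a b c) \<omega> = (if Kr i \<omega> = a \<and> Kr j \<omega> = b \<and> Kr k \<omega> = c then 1 else (0::real))"
      using elim unfolding Ev_def by (auto simp: indicator_def)
    then show ?case using sum_ind3[OF KR_fin elim(1-3), of f] by simp
  qed
  hence "(\<integral>\<omega>. f (Kr i \<omega>) (Kr j \<omega>) (Kr k \<omega>) \<partial>M) =
         (\<integral>\<omega>. (\<Sum>a\<in>KR. \<Sum>b\<in>KR. \<Sum>c\<in>KR. f a b c * indicator (Ev a b c) \<omega>) \<partial>M)"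
    using fm Ev_sets by (intro integral_cong_AE) auto
  also have "\<dots> = (\<Sum>a\<in>KR. \<Sum>b\<in>KR. \<Sum>c\<in>KR. f a b c * prob (Ev a b c))"
    using Ev_sets by (simp add: Bochner_Integration.integral_sum integrable_sum emeasure_eq_measure)
  also have "\<dots> = (\<Sum>a\<in>KR. \<Sum>b\<in>KR. \<Sum>c\<in>KR. f a b c / NN ^ 3)"
  proof (intro sum.cong refl)
    fix a b c assume abc: "a \<in> KR" "b \<in> KR" "c \<in> KR"
    define h where "h l = (if l = i then a else if l = j then b else c)" for l
    have "prob (\<Inter>l\<in>{i,j,k}. Kr l -` {h l} \<inter> space M) = (\<Prod>l\<in>{i,j,k}. prob (Kr l -` {h l} \<inter> space M))"
      by (rule indep_varsD[OF indep]) auto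
    also have "\<dots> = 1 / NN ^ 3"
      using ij abc by (simp add: h_def prob_single power3_eq_cube)
    also have "(\<Inter>l\<in>{i,j,k}. Kr l -` {h l} \<inter> space M) = Ev a b c"
      using ij unfolding Ev_def h_def by auto
    finally show "f a b c * prob (Ev a b c) = f a b c / NN ^ 3" by simp
  qed
  also have "\<dots> = (\<Sum>a\<in>KR. \<Sum>b\<in>KR. \<Sum>c\<in>KR. f a b c) / NN ^ 3"
    by (simp add: sum_divide_distrib)
  finally show ?thesis .
qed

end


lemma tri3_if: "tri3 a b c = (if a \<inter> b \<noteq> {} \<and> b \<inter> c \<noteq> {} \<and> a \<inter> c \<noteq> {} then 1 else 0)"
  unfolding tri3_def dj_def by auto

lemma triangles_Tr: "triangles Ks n = card {t \<in> Tr n. case t of (i, j, k) \<Rightarrow>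
      Ks i \<inter> Ks j \<noteq> {} \<and> Ks j \<inter> Ks k \<noteq> {} \<and> Ks i \<inter> Ks k \<noteq> {}}"
  unfolding triangles_def Tr_def rkg_adj_def
  by (intro arg_cong[where f=card]) auto

lemma triangles_sum: "real (triangles Ks n) =
   (\<Sum>t\<in>Tr n. case t of (i, j, k) \<Rightarrow> tri3 (Ks i) (Ks j) (Ks k))"
proof -
  have "(\<Sum>t\<in>Tr n. case t of (i, j, k) \<Rightarrow> tri3 (Ks i) (Ks j) (Ks k)) =
        (\<Sum>t\<in>Tr n. if (case t of (i, j, k) \<Rightarrow>
      Ks i \<inter> Ks j \<noteq> {} \<and> Ks j \<inter> Ks k \<noteq> {} \<and> Ks i \<inter> Ks k \<noteq> {}) then 1 else 0)"
    by (intro sum.cong refl) (auto simp: tri3_if split: prod.splits)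
  also have "\<dots> = real (triangles Ks n)"
    unfolding triangles_Tr using finite_Tr[of n] by (simp add: sum.If_cases Int_def)
  finally show ?thesis ..
qed

lemma triangles_mono: "m \<le> n \<Longrightarrow> triangles Ks m \<le> triangles Ks n"
  unfolding triangles_Tr using Tr_mono[of m n] finite_Tr[of n]
  by (intro card_mono) (auto intro: finite_subset)

lemma choose3_mono: "m \<le> n \<Longrightarrow> (m choose 3) \<le> (n choose 3)"
  unfolding card_Tr[symmetric] using Tr_mono finite_Tr by (intro card_mono) auto

definition tset :: "nat \<times> nat \<times> nat \<Rightarrow> nat set" where
  "tset t = (case t of (i, j, k) \<Rightarrow> {i, j, k})"

lemma card_share:
  assumes "t \<in> Tr n"
  shows "card {t' \<in> Tr n. tset t \<inter> tset t' \<noteq> {}} \<le> 9 * n^2"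
proof -
  obtain i j k where tt: "t = (i, j, k)" by (cases t) auto
  have ts: "tset t = {i, j, k}" unfolding tt tset_def by simp
  define S where "S x = {x} \<times> {1..n} \<times> {1..n} \<union> {1..n} \<times> {x} \<times> {1..n} \<union> {1..n} \<times> {1..n} \<times> {x}" for x
  have finS: "finite (S x)" for x unfolding S_def by simp
  have sub: "{t' \<in> Tr n. tset t \<inter> tset t' \<noteq> {}} \<subseteq> (\<Union>x\<in>tset t. S x)"
  proof
    fix t' assume h: "t' \<in> {t' \<in> Tr n. tset t \<inter> tset t' \<noteq> {}}"
    obtain a b c where t': "t' = (a, b, c)" by (cases t') auto
    from h obtain x where x: "x \<in> tset t" "x \<in> {a, b, c}" unfolding t' tset_def by auto
    have r: "a \<in> {1..n}" "b \<in> {1..n}" "c \<in> {1..n}" using h unfolding t' Tr_def by auto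
    from x(2) have "t' \<in> S x" unfolding S_def t' using r by auto
    with x(1) show "t' \<in> (\<Union>x\<in>tset t. S x)" by blast
  qed
  have cS: "card (S x) \<le> 3 * n^2" for x
  proof -
    have "card (S x) \<le> card ({x} \<times> {1..n} \<times> {1..n} \<union> {1..n} \<times> {x} \<times> {1..n}) + card ({1..n} \<times> {1..n} \<times> {x})"
      unfolding S_def by (rule card_Un_le)
    also have "card ({x} \<times> {1..n} \<times> {1..n} \<union> {1..n} \<times> {x} \<times> {1..n}) \<le> card ({x} \<times> {1..n} \<times> {1..n}) + card ({1..n} \<times> {x} \<times> {1..n})"
      by (rule card_Un_le)
    also have "card ({x} \<times> {1..n} \<times> {1..n}) = n * n" by (simp add: card_cartesian_product)
    also have "card ({1..n} \<times> {x} \<times> {1..n}) = n * n" by (simp add: card_cartesian_product)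
    also have "card ({1..n} \<times> {1..n} \<times> {x}) = n * n" by (simp add: card_cartesian_product)
    finally show ?thesis by (simp add: power2_eq_square)
  qed
  have ct: "card (tset t) \<le> 3"
    unfolding ts by (auto simp: card_insert_if)
  have "card {t' \<in> Tr n. tset t \<inter> tset t' \<noteq> {}} \<le> card (\<Union>x\<in>tset t. S x)"
    using sub finS by (intro card_mono) (auto simp: ts)
  also have "\<dots> \<le> (\<Sum>x\<in>tset t. card (S x))"
    by (rule card_UN_le) (simp add: ts)
  also have "\<dots> \<le> card (tset t) * (3 * n^2)"
    using sum_bounded_above[of "tset t" "\<lambda>x. card (S x)" "3*n^2"] cS by simp
  also have "\<dots> \<le> 3 * (3 * n^2)" using ct by (intro mult_right_mono) auto
  finally show ?thesis by simp
qed

context rkg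
begin

abbreviation "\<beta> \<equiv> beta_rkg K P"

lemma int_bdd:
  fixes f :: "'a \<Rightarrow> real"
  assumes "f \<in> borel_measurable M" "\<And>\<omega>. \<omega> \<in> space M \<Longrightarrow> \<bar>f \<omega>\<bar> \<le> B"
  shows "integrable M f"
  using assms by (intro integrable_const_bound[where B=B]) (auto intro: AE_I2)

lemma E_tri:
  assumes "i \<noteq> j" "j \<noteq> k" "i \<noteq> k"
  shows "(\<integral>\<omega>. tri3 (Kr i \<omega>) (Kr j \<omega>) (Kr k \<omega>) \<partial>M) = \<beta>"
  using assms by (subst E3) (auto simp: beta_eq[OF K] tri3_def)

lemma beta01: "0 \<le> \<beta>" "\<beta> \<le> 1"
proof -
  have m: "(\<lambda>\<omega>. tri3 (Kr 0 \<omega>) (Kr 1 \<omega>) (Kr 2 \<omega>)) \<in> borel_measurable M" by measurable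
  have i: "integrable M (\<lambda>\<omega>. tri3 (Kr 0 \<omega>) (Kr 1 \<omega>) (Kr 2 \<omega>))"
    using m tri3_bounds by (intro int_bdd[where B=1]) auto
  have e: "\<beta> = (\<integral>\<omega>. tri3 (Kr 0 \<omega>) (Kr 1 \<omega>) (Kr 2 \<omega>) \<partial>M)"
    by (subst E_tri) auto
  show "0 \<le> \<beta>" unfolding e by (rule integral_nonneg_AE) (simp add: tri3_bounds)
  have "(\<integral>\<omega>. tri3 (Kr 0 \<omega>) (Kr 1 \<omega>) (Kr 2 \<omega>) \<partial>M) \<le> (\<integral>\<omega>. 1 \<partial>M)"
    using i tri3_bounds by (intro integral_mono) auto
  then show "\<beta> \<le> 1" unfolding e by (simp add: prob_space)
qed

definition Z :: "nat \<times> nat \<times> nat \<Rightarrow> 'a \<Rightarrow> real" where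
  "Z t \<omega> = (case t of (i, j, k) \<Rightarrow> tri3 (Kr i \<omega>) (Kr j \<omega>) (Kr k \<omega>) - \<beta>)"

lemma Z_meas[measurable]: "Z t \<in> borel_measurable M"
proof -
  obtain i j k where t: "t = (i, j, k)" by (cases t) auto
  show ?thesis unfolding Z_def t by simp measurable
qed

lemma Z_bdd: "\<bar>Z t \<omega>\<bar> \<le> 1"
proof -
  obtain i j k where t: "t = (i, j, k)" by (cases t) auto
  have "0 \<le> tri3 (Kr i \<omega>) (Kr j \<omega>) (Kr k \<omega>)" "tri3 (Kr i \<omega>) (Kr j \<omega>) (Kr k \<omega>) \<le> 1"
    by (rule tri3_bounds)+
  then show ?thesis using beta01 unfolding Z_def t by (simp add: abs_le_iff)
qed

lemma Z_int: "integrable M (Z t)"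
  using Z_bdd by (intro int_bdd[where B=1]) auto

lemma ZZ_int: "integrable M (\<lambda>\<omega>. Z t \<omega> * Z t' \<omega>)"
proof (rule int_bdd[where B=1])
  show "(\<lambda>\<omega>. Z t \<omega> * Z t' \<omega>) \<in> borel_measurable M" by measurable
  fix \<omega> show "\<bar>Z t \<omega> * Z t' \<omega>\<bar> \<le> 1"
    using Z_bdd[of t \<omega>] Z_bdd[of t' \<omega>] by (simp add: abs_mult mult_le_one)
qed

lemma EZ: "t \<in> Tr n \<Longrightarrow> (\<integral>\<omega>. Z t \<omega> \<partial>M) = 0"
proof -
  assume t: "t \<in> Tr n"
  obtain i j k where tt: "t = (i, j, k)" and ijk: "i < j" "j < k" using t by (cases t) (auto simp: Tr_def)
  have "(\<integral>\<omega>. Z t \<omega> \<partial>M) = (\<integral>\<omega>. tri3 (Kr i \<omega>) (Kr j \<omega>) (Kr k \<omega>) \<partial>M) - (\<integral>\<omega>. \<beta> \<partial>M)"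
    unfolding Z_def tt prod.case
  proof (rule Bochner_Integration.integral_diff)
    show "integrable M (\<lambda>\<omega>. tri3 (Kr i \<omega>) (Kr j \<omega>) (Kr k \<omega>))"
      by (rule int_bdd[where B=1]) (auto simp: tri3_bounds abs_le_iff intro: order.trans[OF _ tri3_bounds(2)])
  qed simp
  also have "\<dots> = 0" using ijk by (subst E_tri) (auto simp: prob_space)
  finally show ?thesis .
qed

lemma E_indep:
  assumes "tset t \<inter> tset t' = {}"
  shows "(\<integral>\<omega>. Z t \<omega> * Z t' \<omega> \<partial>M) = (\<integral>\<omega>. Z t \<omega> \<partial>M) * (\<integral>\<omega>. Z t' \<omega> \<partial>M)"
proof -
  obtain i j k where t: "t = (i, j, k)" by (cases t) auto
  obtain i' j' k' where t': "t' = (i', j', k')" by (cases t') auto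
  define A where "A = {i, j, k}"
  define B where "B = {i', j', k'}"
  have AB: "A \<inter> B = {}" using assms unfolding t t' A_def B_def tset_def by simp
  have ind: "indep_var (PiM A (\<lambda>_. count_space UNIV)) (\<lambda>\<omega>. restrict (\<lambda>l. Kr l \<omega>) A)
                       (PiM B (\<lambda>_. count_space UNIV)) (\<lambda>\<omega>. restrict (\<lambda>l. Kr l \<omega>) B)"
    by (rule indep_var_restrict[OF indep AB]) auto
  have m1: "(\<lambda>x. tri3 (x i) (x j) (x k) - \<beta>) \<in> borel_measurable (PiM A (\<lambda>_. count_space UNIV))"
    unfolding A_def by measurable
  have m2: "(\<lambda>x. tri3 (x i') (x j') (x k') - \<beta>) \<in> borel_measurable (PiM B (\<lambda>_. count_space UNIV))"
    unfolding B_def by measurable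
  note ind2 = indep_var_compose[OF ind m1 m2]
  have c1: "(\<lambda>x. tri3 (x i) (x j) (x k) - \<beta>) \<circ> (\<lambda>\<omega>. restrict (\<lambda>l. Kr l \<omega>) A) = Z t"
    unfolding t Z_def A_def by (auto simp: fun_eq_iff)
  have c2: "(\<lambda>x. tri3 (x i') (x j') (x k') - \<beta>) \<circ> (\<lambda>\<omega>. restrict (\<lambda>l. Kr l \<omega>) B) = Z t'"
    unfolding t' Z_def B_def by (auto simp: fun_eq_iff)
  have "indep_var borel (Z t) borel (Z t')" using ind2 unfolding c1 c2 .
  then show ?thesis by (intro indep_var_lebesgue_integral Z_int)
qed

end


lemma bound216:
  fixes n :: nat assumes "n \<ge> 4"
  shows "9 * real n ^ 2 / real (n choose 3) \<le> 216 / real n"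
proof -
  have n4: "real n \<ge> 4" using assms by simp
  have c: "real (n choose 3) \<ge> real n ^ 3 / 24"
  proof -
    have h: "0 \<le> real n * (real n - 4)" using n4 by simp
    have e1: "(real n - 1) * (real n - 2) = real n * real n - 3 * real n + 2" by (simp add: algebra_simps)
    have e2: "real n * (real n - 4) = real n * real n - 4 * real n" by (simp add: algebra_simps)
    have "(real n - 1) * (real n - 2) \<ge> real n ^ 2 / 4"
      unfolding e1 power2_eq_square using h e2 by linarith
    hence "real n * ((real n - 1) * (real n - 2)) \<ge> real n * (real n ^ 2 / 4)"
      using n4 by (intro mult_left_mono) auto
    thus ?thesis unfolding choose3_real by (simp add: power2_eq_square power3_eq_cube algebra_simps)
  qed
  have cpos: "real n ^ 3 / 24 > 0" using n4 by simp
  have Cpos: "real (n choose 3) > 0" using assms by simp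
  have "9 * real n ^ 2 / real (n choose 3) \<le> 9 * real n ^ 2 / (real n ^ 3 / 24)"
    using c cpos Cpos by (intro divide_left_mono) auto
  also have "\<dots> = 216 / real n" using n4 by (simp add: field_simps power2_eq_square power3_eq_cube)
  finally show ?thesis .
qed

lemma sum_ind_card: "finite A \<Longrightarrow> (\<Sum>x\<in>A. if P x then 1 else 0 :: real) = real (card {x\<in>A. P x})"
  by (simp add: sum.If_cases Int_def)

context rkg
begin

definition S :: "nat \<Rightarrow> 'a \<Rightarrow> real" where
  "S n \<omega> = (\<Sum>t\<in>Tr n. Z t \<omega>)"

lemma S_meas[measurable]: "S n \<in> borel_measurable M"
  unfolding S_def by measurable

lemma S_bdd: "\<bar>S n \<omega>\<bar> \<le> real (n choose 3)"
proof -
  have "\<bar>S n \<omega>\<bar> \<le> (\<Sum>t\<in>Tr n. \<bar>Z t \<omega>\<bar>)" unfolding S_def by (rule sum_abs)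
  also have "\<dots> \<le> real (card (Tr n)) * 1" by (rule sum_bounded_above) (rule Z_bdd)
  finally show ?thesis by (simp add: card_Tr)
qed

lemma T_eq: "real (triangles (\<lambda>i. Kr i \<omega>) n) = S n \<omega> + real (n choose 3) * \<beta>"
proof -
  have "real (triangles (\<lambda>i. Kr i \<omega>) n) = (\<Sum>t\<in>Tr n. Z t \<omega> + \<beta>)"
    unfolding triangles_sum by (intro sum.cong refl) (auto simp: Z_def split: prod.splits)
  also have "\<dots> = S n \<omega> + real (n choose 3) * \<beta>"
    by (simp add: sum.distrib S_def card_Tr)
  finally show ?thesis .
qed

lemma ES2: "(\<integral>\<omega>. (S n \<omega>)^2 \<partial>M) \<le> 9 * real n ^ 2 * real (n choose 3)"
proof -
  have "(\<integral>\<omega>. (S n \<omega>)^2 \<partial>M) = (\<integral>\<omega>. (\<Sum>t\<in>Tr n. \<Sum>t'\<in>Tr n. Z t \<omega> * Z t' \<omega>) \<partial>M)"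
    unfolding S_def power2_eq_square sum_product ..
  also have "\<dots> = (\<Sum>t\<in>Tr n. \<Sum>t'\<in>Tr n. (\<integral>\<omega>. Z t \<omega> * Z t' \<omega> \<partial>M))"
    by (simp add: Bochner_Integration.integral_sum integrable_sum ZZ_int)
  also have "\<dots> \<le> (\<Sum>t\<in>Tr n. \<Sum>t'\<in>Tr n. (if tset t \<inter> tset t' = {} then 0 else 1))"
  proof (intro sum_mono)
    fix t t' assume tt: "t \<in> Tr n" "t' \<in> Tr n"
    show "(\<integral>\<omega>. Z t \<omega> * Z t' \<omega> \<partial>M) \<le> (if tset t \<inter> tset t' = {} then 0 else 1)"
    proof (cases "tset t \<inter> tset t' = {}")
      case True
      have "(\<integral>\<omega>. Z t \<omega> * Z t' \<omega> \<partial>M) = (\<integral>\<omega>. Z t \<omega> \<partial>M) * (\<integral>\<omega>. Z t' \<omega> \<partial>M)"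
        by (rule E_indep[OF True])
      also have "\<dots> = 0" using EZ[OF tt(1)] by simp
      finally show ?thesis using True by simp
    next
      case False
      have "(\<integral>\<omega>. Z t \<omega> * Z t' \<omega> \<partial>M) \<le> (\<integral>\<omega>. 1 \<partial>M)"
      proof (rule integral_mono)
        show "integrable M (\<lambda>\<omega>. Z t \<omega> * Z t' \<omega>)" by (rule ZZ_int)
        show "integrable M (\<lambda>\<omega>. 1::real)" by simp
        fix \<omega> show "Z t \<omega> * Z t' \<omega> \<le> 1"
        proof -
          have "\<bar>Z t \<omega> * Z t' \<omega>\<bar> \<le> 1"
            using Z_bdd[of t \<omega>] Z_bdd[of t' \<omega>] by (simp add: abs_mult mult_le_one)
          then show ?thesis by linarith
        qed
      qed
      then show ?thesis using False by (simp add: prob_space)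
    qed
  qed
  also have "\<dots> = (\<Sum>t\<in>Tr n. real (card {t' \<in> Tr n. tset t \<inter> tset t' \<noteq> {}}))"
  proof (intro sum.cong refl)
    fix t
    have "(\<Sum>t'\<in>Tr n. (if tset t \<inter> tset t' = {} then 0 else 1)) =
          (\<Sum>t'\<in>Tr n. (if tset t \<inter> tset t' \<noteq> {} then 1 else (0::real)))"
      by (intro sum.cong refl) simp
    also have "\<dots> = real (card {t' \<in> Tr n. tset t \<inter> tset t' \<noteq> {}})"
      by (rule sum_ind_card[OF finite_Tr])
    finally show "(\<Sum>t'\<in>Tr n. (if tset t \<inter> tset t' = {} then 0 else 1)) =
          real (card {t' \<in> Tr n. tset t \<inter> tset t' \<noteq> {}})" .
  qed
  also have "\<dots> \<le> (\<Sum>t\<in>Tr n. 9 * real n ^ 2)"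
  proof (intro sum_mono)
    fix t assume "t \<in> Tr n"
    have "real (card {t' \<in> Tr n. tset t \<inter> tset t' \<noteq> {}}) \<le> real (9 * n ^ 2)"
      using card_share[OF \<open>t \<in> Tr n\<close>] by (simp only: of_nat_le_iff)
    then show "real (card {t' \<in> Tr n. tset t \<inter> tset t' \<noteq> {}}) \<le> 9 * real n ^ 2" by simp
  qed
  also have "\<dots> = 9 * real n ^ 2 * real (n choose 3)" by (simp add: card_Tr)
  finally show ?thesis .
qed

definition U :: "nat \<Rightarrow> 'a \<Rightarrow> real" where
  "U n \<omega> = real (triangles (\<lambda>i. Kr i \<omega>) n) / real (n choose 3)"

lemma U_diff: "n \<ge> 3 \<Longrightarrow> U n \<omega> - \<beta> = S n \<omega> / real (n choose 3)"
  unfolding U_def T_eq by (simp add: field_simps)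

lemma EV:
  assumes n: "n \<ge> 4"
  shows "(\<integral>\<omega>. (U n \<omega> - \<beta>)^2 \<partial>M) \<le> 216 / real n"
proof -
  have C: "real (n choose 3) > 0" using n by simp
  have "(\<integral>\<omega>. (U n \<omega> - \<beta>)^2 \<partial>M) = (\<integral>\<omega>. (S n \<omega>)^2 / real (n choose 3) ^ 2 \<partial>M)"
    using n by (simp add: U_diff power_divide)
  also have "\<dots> = (\<integral>\<omega>. (S n \<omega>)^2 \<partial>M) / real (n choose 3) ^ 2" by simp
  also have "\<dots> \<le> 9 * real n ^ 2 * real (n choose 3) / real (n choose 3) ^ 2"
    using ES2 C by (intro divide_right_mono) auto
  also have "\<dots> = 9 * real n ^ 2 / real (n choose 3)" using C by (simp add: power2_eq_square)
  also have "\<dots> \<le> 216 / real n" by (rule bound216[OF n])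
  finally show ?thesis .
qed

end


context rkg
begin

lemma T_meas[measurable]: "(\<lambda>\<omega>. real (triangles (\<lambda>i. Kr i \<omega>) n)) \<in> borel_measurable M"
  unfolding T_eq by measurable

lemma U_meas[measurable]: "U n \<in> borel_measurable M"
  unfolding U_def by measurable

definition V :: "nat \<Rightarrow> 'a \<Rightarrow> real" where
  "V k \<omega> = (U ((k+3)^2) \<omega> - \<beta>)^2"

lemma V_meas[measurable]: "V k \<in> borel_measurable M"
  unfolding V_def by measurable

lemma V_int: "integrable M (V k)"
proof (rule int_bdd[where B=1])
  show "V k \<in> borel_measurable M" by measurable
  fix \<omega>
  define n where "n = (k+3)^2"
  have n3: "n \<ge> 3" unfolding n_def using mult_le_mono[of 3 "k+3" 3 "k+3"] by (simp add: power2_eq_square)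
  have C: "real (n choose 3) > 0" using n3 by simp
  have "\<bar>S n \<omega>\<bar> / real (n choose 3) \<le> 1" using S_bdd[of n \<omega>] C by simp
  then have a: "\<bar>S n \<omega> / real (n choose 3)\<bar> \<le> 1" using C by (simp add: abs_divide)
  have "\<bar>S n \<omega> / real (n choose 3)\<bar>^2 \<le> 1"
    by (rule power_le_one[OF abs_ge_zero a])
  then have "(S n \<omega> / real (n choose 3))^2 \<le> 1" by (simp only: power2_abs)
  then show "\<bar>V k \<omega>\<bar> \<le> 1" unfolding V_def n_def[symmetric] U_diff[OF n3] by simp
qed

lemma EV': "(\<integral>\<omega>. V k \<omega> \<partial>M) \<le> 216 * inverse (real (k+3) ^ 2)"
proof -
  have "(\<integral>\<omega>. V k \<omega> \<partial>M) \<le> 216 / real ((k+3)^2)"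
    unfolding V_def by (rule EV) (use mult_le_mono[of 3 "k+3" 3 "k+3"] in \<open>simp add: power2_eq_square\<close>)
  also have "\<dots> = 216 * inverse (real (k+3) ^ 2)" by (simp add: divide_inverse)
  finally show ?thesis .
qed

lemma summable_bound: "summable (\<lambda>k. 216 * inverse (real (k+3) ^ 2))"
proof -
  have "summable (\<lambda>k. inverse (real k ^ 2))" by (rule inverse_power_summable) simp
  then have "summable (\<lambda>k. inverse (real (k+3) ^ 2))"
    using summable_ignore_initial_segment[of "\<lambda>k. inverse (real k ^ 2)" 3] by simp
  then show ?thesis by (rule summable_mult)
qed

lemma AE_summable: "AE \<omega> in M. summable (\<lambda>k. V k \<omega>)"
proof -
  have V0: "\<And>k \<omega>. 0 \<le> V k \<omega>" unfolding V_def by simp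
  have EV0: "\<And>k. 0 \<le> (\<integral>\<omega>. V k \<omega> \<partial>M)" using V0 by (simp add: integral_nonneg_AE)
  have sE: "summable (\<lambda>k. (\<integral>\<omega>. V k \<omega> \<partial>M))"
    by (rule summable_comparison_test'[OF summable_bound, of 0]) (use EV0 EV' in simp)
  have "(\<integral>\<^sup>+\<omega>. (\<Sum>k. ennreal (V k \<omega>)) \<partial>M) = (\<Sum>k. \<integral>\<^sup>+\<omega>. ennreal (V k \<omega>) \<partial>M)"
    by (rule nn_integral_suminf) measurable
  also have "\<dots> = (\<Sum>k. ennreal (\<integral>\<omega>. V k \<omega> \<partial>M))"
    by (intro suminf_cong nn_integral_eq_integral V_int) (simp add: V0)
  also have "\<dots> \<noteq> \<infinity>"
    using ennreal_suminf_neq_top[OF sE EV0] by simp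
  finally have "(\<integral>\<^sup>+\<omega>. (\<Sum>k. ennreal (V k \<omega>)) \<partial>M) \<noteq> \<infinity>" .
  then have "AE \<omega> in M. (\<Sum>k. ennreal (V k \<omega>)) \<noteq> \<infinity>"
    by (intro nn_integral_PInf_AE) measurable
  then show ?thesis
  proof (rule AE_mp, intro AE_I2 impI)
    fix \<omega> assume "(\<Sum>k. ennreal (V k \<omega>)) \<noteq> \<infinity>"
    then show "summable (\<lambda>k. V k \<omega>)" using summable_suminf_not_top[of "\<lambda>k. V k \<omega>"] V0 by simp
  qed
qed

theorem main: "AE \<omega> in M. (\<lambda>n. real (triangles (\<lambda>i. Kr i \<omega>) n) / real (n choose 3)) \<longlonglongrightarrow> \<beta>"
  using AE_summable
proof (rule AE_mp, intro AE_I2 impI)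
  fix \<omega> assume s: "summable (\<lambda>k. V k \<omega>)"
  define T where "T n = real (triangles (\<lambda>i. Kr i \<omega>) n)" for n
  define c where "c n = real (n choose 3)" for n
  have "(\<lambda>k. V k \<omega>) \<longlonglongrightarrow> 0" by (rule summable_LIMSEQ_zero[OF s])
  then have "(\<lambda>k. sqrt (V k \<omega>)) \<longlonglongrightarrow> sqrt 0" by (rule tendsto_real_sqrt)
  then have "(\<lambda>k. \<bar>U ((k+3)^2) \<omega> - \<beta>\<bar>) \<longlonglongrightarrow> 0" unfolding V_def by simp
  then have "(\<lambda>k. U ((k+3)^2) \<omega> - \<beta>) \<longlonglongrightarrow> 0" by (simp add: tendsto_rabs_zero_iff)
  then have lim: "(\<lambda>k. T ((k+3)^2) / c ((k+3)^2)) \<longlonglongrightarrow> \<beta>"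
    unfolding T_def c_def U_def[symmetric] by (simp add: LIM_zero_iff)
  have "(\<lambda>n. T n / c n) \<longlonglongrightarrow> \<beta>"
  proof (rule sandwich[OF _ _ _ _ lim])
    show "\<And>m n. m \<le> n \<Longrightarrow> T m \<le> T n" unfolding T_def
      by (simp only: of_nat_le_iff triangles_mono)
    show "\<And>n. 0 \<le> T n" unfolding T_def by simp
    show "\<And>m n. m \<le> n \<Longrightarrow> c m \<le> c n" unfolding c_def
      by (simp only: of_nat_le_iff choose3_mono)
    show "\<And>n. 9 \<le> n \<Longrightarrow> 0 < c n" unfolding c_def by (simp add: zero_less_binomial_iff)
    show "(\<lambda>k. c ((k + 4)\<^sup>2) / c ((k + 3)\<^sup>2)) \<longlonglongrightarrow> 1" unfolding c_def by (rule ratio_lim)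
  qed
  then show "(\<lambda>n. real (triangles (\<lambda>i. Kr i \<omega>) n) / real (n choose 3)) \<longlonglongrightarrow> \<beta>"
    unfolding T_def c_def .
qed

end

theorem lemma1:
  fixes M :: "'a measure" and Kr :: "nat \<Rightarrow> 'a \<Rightarrow> nat set" and K P :: nat
  assumes "prob_space M"
    and "0 < K" and "K \<le> P"
    and "\<And>i. Kr i \<in> M \<rightarrow>\<^sub>M count_space UNIV"
    and "prob_space.indep_vars M (\<lambda>_. count_space UNIV) Kr UNIV"
    and "\<And>i. distr M (count_space UNIV) (Kr i) = measure_pmf (pmf_of_set (key_rings K P))"
  shows "AE \<omega> in M. (\<lambda>n. real (triangles (\<lambda>i. Kr i \<omega>) n) / real (n choose 3))
           \<longlonglongrightarrow> beta_rkg K P"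
proof -
  interpret rkg M Kr K P
    by (rule rkg.intro[OF assms(1)], unfold_locales) (use assms in auto)
  show ?thesis by (rule main)
qed


end
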